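(* Assume the setting described in the context and fix $T_1>0$. Suppose Assumptions (A1), (A2) and (A3) hold. Then \[\lim_{n\rightarrow\infty}\sup_{x\in F}\sup_{t\geq T_1}\left|\beta(n)q^n_{\lfloor\gamma(n)t\rfloor}(g_n(x))-q_t(x)\right|=0.\]
   Context: Let $(E,d_E)$ be a metric space and $F\subseteq E$ such that $F\cap\overline{B}_E(x,r)$ is compact for all $x\in E$, $r>0$; here $\overline{B}_E(x,r)$, $B_E(x,r)$ are the closed and open balls of $(E,d_E)$. Let $d_F:=d_E|_{F\times F}$ and let $B_F(x,r)$ be the open ball in $(F,d_F)$. Fix $\rho\in F$, a Radon measure $\nu$ of full support on $(F,d_F)$ (regarded also as a Borel measure on $E$ via $\nu(A):=\nu(A\cap F)$), and a function $(q_t(x))_{x\in F,t>0}$, jointly continuous in $(t,x)$, with $q_t\ge0$ and $\int_F q_t\,d\nu=1$ for each $t>0$. For a locally finite connected graph $G$ with at least two vertices, vertex set $V(G)$, edge set $E(G)$ and distinguished vertex $\rho(G)$: $d_G$ is the shortest-path metric and $B_G(x,r)$ the open $d_G$-ball; $\mu^G$ is a symmetric weight with $\mu^G_{xy}>0$ iff $\{x,y\}\in E(G)$; $\mu^G_x:=\sum_y\mu^G_{xy}$; $\nu^G(A):=\sum_{x\in A}\mu^G_x$. The discrete time simple random walk $X^G$ has transition probabilities $P_G(x,y)=\mu^G_{xy}/\mu^G_x$ and law $\mathbf{P}^G_x$ from $x$. Set $p^G_m(x,y):=\mathbf{P}^G_x(X^G_m=y)/\nu^G(\{y\})$, $q^G_m(x,y):=\frac12(p^G_m(x,y)+p^G_{m+1}(x,y))$,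 $q^G_m(x):=q^G_m(\rho(G),x)$. Let $(G^n)_{n\ge1}$ be locally finite connected graphs with $\#V(G^n)\ge2$, $V(G^n)\subseteq E$, $\rho(G^n)=\rho$; write $\nu^n,X^n,q^n,\mathbf{P}^{G^n}$ for $\nu^{G^n},X^{G^n},q^{G^n}$, etc. Let $(\alpha(n)),(\beta(n)),(\gamma(n))$ be non-negative sequences diverging to $\infty$. For $x\in E$, $g_n(x)$ denotes a point of $V(G^n)$ minimising $d_E(x,\cdot)$ over $V(G^n)$. Assumption (A1): (a) there is $c_1>0$ with $d_{G^n}(x,y)\ge c_1\alpha(n)d_E(x,y)$ for all $x,y\in V(G^n)$, $n\ge1$; and there is a non-negative sequence $\tilde\alpha(n)=o(\alpha(n))$ such that for each $r>0$ there exist $c_2<\infty$, $n_0$ with $d_{G^n}(x,y)\le c_2\alpha(n)d_E(x,y)+\tilde\alpha(n)$ for all $x,y\in V(G^n)\cap B_E(\rho,r)$, $n\ge n_0$. (b) For each $r>0$, $\lim_n\sup_{x\in B_F(\rho,r)}d_E(x,V(G^n))=0$. (c) For every $x\in F$, $r>0$, $\lim_n\beta(n)^{-1}\nu^n(B_E(x,r))=\nu(B_E(x,r))$. (d) For every compact interval $I\subset(0,\infty)$, $x\in F$, $r>0$, $\lim_n\mathbf{P}^{G^n}_\rho(X^n_{\lfloor\gamma(n)t\rfloor}\in B_E(x,r))=\int_{B_F(x,r)}q_t(y)\nu(dy)$ uniformly for $t\in I$. Assumption (A2): for every compact interval $I\subset(0,\infty)$ and $r>0$, \[\lim_{\delta\to0}\limsup_{n\to\infty}\sup_{\substack{x,y\in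 B_{G^n}(\rho,\alpha(n)r):\\ d_{G^n}(x,y)\le\alpha(n)\delta}}\sup_{t\in I}\beta(n)\left|q^n_{\lfloor\gamma(n)t\rfloor}(x)-q^n_{\lfloor\gamma(n)t\rfloor}(y)\right|=0.\] Assumption (A3): $(F,d_F)$ has the midpoint property (for all $x,y\in F$ there is $z\in F$ with $d_F(x,z)=\frac12 d_F(x,y)=d_F(z,y)$), and (a) $\lim_{t\to\infty}\sup_{x\in F}q_t(x)=0$ and $\lim_{r\to\infty}\sup_{x\in F\setminus B_F(\rho,r)}\sup_{t\in I}q_t(x)=0$ for every compact interval $I\subset(0,\infty)$; (b) $\lim_{t\to\infty}\limsup_{n\to\infty}\sup_{x\in V(G^n)}\beta(n)q^n_{\lfloor\gamma(n)t\rfloor}(x)=0$ and, for every compact interval $I\subset(0,\infty)$, $\lim_{r\to\infty}\limsup_{n\to\infty}\sup_{x\in V(G^n)\setminus B_{G^n}(\rho,\alpha(n)r)}\sup_{t\in I}\beta(n)q^n_{\lfloor\gamma(n)t\rfloor}(x)=0$. *)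

theory Defs
  imports "HOL-Probability.Probability" "HOL-Library.Landau_Symbols"
begin

text \<open>A weighted graph is given by a vertex set V and a symmetric conductance
  function mu, with mu x y > 0 iff {x,y} is an edge.\<close>

definition adj :: "('a \<Rightarrow> 'a \<Rightarrow> real) \<Rightarrow> 'a \<Rightarrow> 'a \<Rightarrow> bool" where
  "adj mu x y \<longleftrightarrow> 0 < mu x y"

definition wgraph :: "'a set \<Rightarrow> ('a \<Rightarrow> 'a \<Rightarrow> real) \<Rightarrow> bool" where
  "wgraph V mu \<longleftrightarrow>
     (\<forall>x y. mu x y = mu y x) \<and> (\<forall>x y. 0 \<le> mu x y) \<and>
     (\<forall>x y. 0 < mu x y \<longrightarrow> x \<in> V \<and> y \<in> V \<and> x \<noteq> y) \<and>
     (\<forall>x\<in>V. finite {y. 0 < mu x y}) \<and>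
     (\<forall>x\<in>V. \<forall>y\<in>V. (adj mu)\<^sup>*\<^sup>* x y) \<and>
     (\<exists>x\<in>V. \<exists>y\<in>V. x \<noteq> y)"

definition gdist :: "('a \<Rightarrow> 'a \<Rightarrow> real) \<Rightarrow> 'a \<Rightarrow> 'a \<Rightarrow> nat" where
  "gdist mu x y = (LEAST k. (((adj mu) ^^ k) :: 'a \<Rightarrow> 'a \<Rightarrow> bool) x y)"

definition gball :: "'a set \<Rightarrow> ('a \<Rightarrow> 'a \<Rightarrow> real) \<Rightarrow> 'a \<Rightarrow> real \<Rightarrow> 'a set" where
  "gball V mu x s = {y \<in> V. real (gdist mu x y) < s}"

definition wdeg :: "('a \<Rightarrow> 'a \<Rightarrow> real) \<Rightarrow> 'a \<Rightarrow> real" where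
  "wdeg mu x = (\<Sum>y\<in>{y. 0 < mu x y}. mu x y)"

definition gmeas :: "'a set \<Rightarrow> ('a \<Rightarrow> 'a \<Rightarrow> real) \<Rightarrow> 'a set \<Rightarrow> ennreal" where
  "gmeas V mu A = (\<integral>\<^sup>+ x. ennreal (wdeg mu x) \<partial>count_space (A \<inter> V))"

fun stepprob :: "('a \<Rightarrow> 'a \<Rightarrow> real) \<Rightarrow> nat \<Rightarrow> 'a \<Rightarrow> 'a \<Rightarrow> real" where
  "stepprob mu 0 x y = (if x = y then 1 else 0)"
| "stepprob mu (Suc m) x y =
     (\<Sum>z\<in>{z. 0 < mu x z}. mu x z / wdeg mu x * stepprob mu m z y)"

definition hitprob :: "('a \<Rightarrow> 'a \<Rightarrow> real) \<Rightarrow> nat \<Rightarrow> 'a \<Rightarrow> 'a set \<Rightarrow> real" where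
  "hitprob mu m x A = (\<Sum>\<^sub>\<infinity> y\<in>A. stepprob mu m x y)"

definition pdens :: "('a \<Rightarrow> 'a \<Rightarrow> real) \<Rightarrow> nat \<Rightarrow> 'a \<Rightarrow> 'a \<Rightarrow> real" where
  "pdens mu m x y = stepprob mu m x y / wdeg mu y"

definition qdens :: "('a \<Rightarrow> 'a \<Rightarrow> real) \<Rightarrow> nat \<Rightarrow> 'a \<Rightarrow> 'a \<Rightarrow> real" where
  "qdens mu m x y = (pdens mu m x y + pdens mu (Suc m) x y) / 2"

end

theory Submission
  imports Defs
begin

lemma wg_finN: "wgraph V mu \<Longrightarrow> finite {y. 0 < mu x y}"
proof -
  assume w: "wgraph V mu"
  show ?thesis
  proof (cases "x \<in> V")
    case True then show ?thesis using w unfolding wgraph_def by blast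
  next
    case False
    then have "{y. 0 < mu x y} = {}" using w unfolding wgraph_def by blast
    then show ?thesis by simp
  qed
qed

lemma wg_sym: "wgraph V mu \<Longrightarrow> mu x y = mu y x"
  unfolding wgraph_def by blast

lemma wg_nonneg: "wgraph V mu \<Longrightarrow> 0 \<le> mu x y"
  unfolding wgraph_def by blast

lemma wg_inV: "wgraph V mu \<Longrightarrow> 0 < mu x y \<Longrightarrow> x \<in> V \<and> y \<in> V"
  unfolding wgraph_def by blast

lemma wdeg_nonneg: "wgraph V mu \<Longrightarrow> 0 \<le> wdeg mu x"
  unfolding wdeg_def by (intro sum_nonneg) auto

lemma stepprob_nonneg: "wgraph V mu \<Longrightarrow> 0 \<le> stepprob mu m x y"
proof (induction m arbitrary: x)
  case 0 then show ?case by simp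
next
  case (Suc m)
  show ?case using Suc wdeg_nonneg[OF Suc.prems]
    by (auto intro!: sum_nonneg mult_nonneg_nonneg divide_nonneg_nonneg)
qed

lemma stepprob_last:
  assumes w: "wgraph V mu"
  shows "stepprob mu (Suc m) x y = (\<Sum>z\<in>{z. 0 < mu y z}. stepprob mu m x z * mu z y / wdeg mu z)"
proof (induction m arbitrary: x)
  case 0
  have L: "stepprob mu (Suc 0) x y = (if 0 < mu x y then mu x y / wdeg mu x else 0)"
  proof (cases "0 < mu x y")
    case True
    have "(\<Sum>z\<in>{z. 0 < mu x z}. mu x z / wdeg mu x * (if z = y then 1 else 0))
        = (\<Sum>z\<in>{z. 0 < mu x z}. if z = y then mu x z / wdeg mu x else 0)"
      by (rule sum.cong) auto
    also have "\<dots> = mu x y / wdeg mu x"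
      using True wg_finN[OF w, of x] by (simp add: sum.delta')
    finally have "(\<Sum>z\<in>{z. 0 < mu x z}. mu x z / wdeg mu x * (if z = y then 1 else 0)) = mu x y / wdeg mu x" .
    then show ?thesis using True by simp
  next
    case False
    then show ?thesis by (auto intro!: sum.neutral)
  qed
  have "(\<Sum>z\<in>{z. 0 < mu y z}. stepprob mu 0 x z * mu z y / wdeg mu z)
        = (\<Sum>z\<in>{z. 0 < mu y z}. if x = z then mu x y / wdeg mu x else 0)"
    by (rule sum.cong) auto
  also have "\<dots> = (if 0 < mu x y then mu x y / wdeg mu x else 0)"
    using wg_finN[OF w, of y] wg_sym[OF w, of x y] by (simp add: sum.delta)
  finally have R: "(\<Sum>z\<in>{z. 0 < mu y z}. stepprob mu 0 x z * mu z y / wdeg mu z)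
        = (if 0 < mu x y then mu x y / wdeg mu x else 0)" .
  show ?case using L R by simp
next
  case (Suc m)
  have "stepprob mu (Suc (Suc m)) x y
      = (\<Sum>z\<in>{z. 0 < mu x z}. mu x z / wdeg mu x *
            (\<Sum>u\<in>{u. 0 < mu y u}. stepprob mu m z u * mu u y / wdeg mu u))"
    using Suc.IH by simp
  also have "\<dots> = (\<Sum>z\<in>{z. 0 < mu x z}. \<Sum>u\<in>{u. 0 < mu y u}.
            mu x z / wdeg mu x * (stepprob mu m z u * mu u y / wdeg mu u))"
    by (simp add: sum_distrib_left)
  also have "\<dots> = (\<Sum>u\<in>{u. 0 < mu y u}. \<Sum>z\<in>{z. 0 < mu x z}.
            mu x z / wdeg mu x * (stepprob mu m z u * mu u y / wdeg mu u))"
    by (rule sum.swap)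
  also have "\<dots> = (\<Sum>u\<in>{u. 0 < mu y u}. stepprob mu (Suc m) x u * mu u y / wdeg mu u)"
    by (simp add: sum_distrib_right sum_divide_distrib mult.assoc)
  finally show ?case .
qed

lemma pdens_step:
  assumes w: "wgraph V mu"
  shows "pdens mu (Suc m) x y = (\<Sum>z\<in>{z. 0 < mu y z}. mu y z / wdeg mu y * pdens mu m x z)"
  unfolding pdens_def stepprob_last[OF w] sum_divide_distrib
  by (rule sum.cong) (auto simp: wg_sym[OF w, of y] field_simps)

lemma qdens_step:
  assumes w: "wgraph V mu"
  shows "qdens mu (Suc m) x y = (\<Sum>z\<in>{z. 0 < mu y z}. mu y z / wdeg mu y * qdens mu m x z)"
  unfolding qdens_def pdens_step[OF w, of "Suc m" x y] pdens_step[OF w, of m x y]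
  by (simp add: sum.distrib sum_divide_distrib distrib_left add_divide_distrib)

lemma wdeg_sum: "(\<Sum>z\<in>{z. 0 < mu y z}. mu y z / wdeg mu y) \<le> 1"
proof (cases "wdeg mu y = 0")
  case True then show ?thesis by simp
next
  case False
  have "(\<Sum>z\<in>{z. 0 < mu y z}. mu y z / wdeg mu y) = (\<Sum>z\<in>{z. 0 < mu y z}. mu y z) / wdeg mu y"
    by (rule sum_divide_distrib[symmetric])
  also have "\<dots> = wdeg mu y / wdeg mu y" unfolding wdeg_def ..
  finally have "(\<Sum>z\<in>{z. 0 < mu y z}. mu y z / wdeg mu y) = wdeg mu y / wdeg mu y" .
  then show ?thesis using False by simp
qed

lemma qdens_mono1:
  assumes w: "wgraph V mu" and c: "0 \<le> c" and b: "\<forall>z\<in>V. qdens mu m x z \<le> c"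
  shows "qdens mu (Suc m) x y \<le> c"
proof -
  have "qdens mu (Suc m) x y \<le> (\<Sum>z\<in>{z. 0 < mu y z}. mu y z / wdeg mu y * c)"
    unfolding qdens_step[OF w]
  proof (rule sum_mono)
    fix z assume "z \<in> {z. 0 < mu y z}"
    then have "z \<in> V" and "0 \<le> mu y z / wdeg mu y"
      using wg_inV[OF w] wdeg_nonneg[OF w, of y] by auto
    then show "mu y z / wdeg mu y * qdens mu m x z \<le> mu y z / wdeg mu y * c"
      using b by (intro mult_left_mono) auto
  qed
  also have "\<dots> = (\<Sum>z\<in>{z. 0 < mu y z}. mu y z / wdeg mu y) * c"
    by (simp add: sum_distrib_right)
  also have "\<dots> \<le> 1 * c" using wdeg_sum c by (intro mult_right_mono) auto
  finally show ?thesis by simp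
qed

lemma qdens_mono:
  assumes w: "wgraph V mu" and c: "0 \<le> c" and b: "\<forall>z\<in>V. qdens mu m x z \<le> c"
  shows "\<forall>z\<in>V. qdens mu (m + k) x z \<le> c"
proof (induction k)
  case 0 then show ?case using b by simp
next
  case (Suc k) then show ?case using qdens_mono1[OF w c] by simp
qed

lemma stepprob_supp_fin:
  assumes w: "wgraph V mu"
  shows "finite {y. stepprob mu m x y \<noteq> 0}"
proof (induction m arbitrary: x)
  case 0
  have "{y. stepprob mu 0 x y \<noteq> 0} = {x}" by auto
  then show ?case by simp
next
  case (Suc m)
  have "{y. stepprob mu (Suc m) x y \<noteq> 0} \<subseteq> (\<Union>z\<in>{z. 0 < mu x z}. {y. stepprob mu m z y \<noteq> 0})"
  proof
    fix y assume "y \<in> {y. stepprob mu (Suc m) x y \<noteq> 0}"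
    then have "(\<Sum>z\<in>{z. 0 < mu x z}. mu x z / wdeg mu x * stepprob mu m z y) \<noteq> 0" by simp
    then obtain z where "z \<in> {z. 0 < mu x z}" "mu x z / wdeg mu x * stepprob mu m z y \<noteq> 0"
      by (meson sum.neutral)
    then show "y \<in> (\<Union>z\<in>{z. 0 < mu x z}. {y. stepprob mu m z y \<noteq> 0})" by auto
  qed
  moreover have "finite (\<Union>z\<in>{z. 0 < mu x z}. {y. stepprob mu m z y \<noteq> 0})"
    using wg_finN[OF w] Suc.IH by blast
  ultimately show ?case by (rule finite_subset)
qed

lemma stepprob_supp_V:
  assumes w: "wgraph V mu" and x: "x \<in> V" and ne: "stepprob mu m x y \<noteq> 0"
  shows "y \<in> V"
proof (cases m)
  case 0 then show ?thesis using x ne by (auto split: if_splits)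
next
  case (Suc k)
  then have "(\<Sum>z\<in>{z. 0 < mu y z}. stepprob mu k x z * mu z y / wdeg mu z) \<noteq> 0"
    using ne stepprob_last[OF w] by simp
  then obtain z where "0 < mu y z" by (metis (mono_tags, lifting) empty_Collect_eq sum.empty)
  then show ?thesis using wg_inV[OF w] by blast
qed

lemma wdeg_pos:
  assumes w: "wgraph V mu" and y: "y \<in> V"
  shows "0 < wdeg mu y"
proof -
  obtain y' where y': "y' \<in> V" "y' \<noteq> y" using w unfolding wgraph_def by blast
  have "(adj mu)\<^sup>*\<^sup>* y y'" using w y y' unfolding wgraph_def by blast
  then obtain z where "adj mu y z" using y'(2) by (metis converse_rtranclpE)
  then have z: "0 < mu y z" unfolding adj_def .
  have "mu y z \<le> wdeg mu y" unfolding wdeg_def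
    using z wg_finN[OF w, of y] by (intro member_le_sum) auto
  then show ?thesis using z by simp
qed

lemma stepprob_eq:
  assumes w: "wgraph V mu" and x: "x \<in> V"
  shows "stepprob mu m x y = pdens mu m x y * wdeg mu y"
proof (cases "stepprob mu m x y = 0")
  case True then show ?thesis by (simp add: pdens_def)
next
  case False
  then have "y \<in> V" using stepprob_supp_V[OF w x] by blast
  then show ?thesis using wdeg_pos[OF w \<open>y \<in> V\<close>] by (simp add: pdens_def)
qed

lemma qdens_nonneg: "wgraph V mu \<Longrightarrow> 0 \<le> qdens mu m x y"
  unfolding qdens_def pdens_def
  using stepprob_nonneg wdeg_nonneg by (metis add_nonneg_nonneg divide_nonneg_nonneg zero_le_numeral)

lemma set_int_approx:
  fixes f :: "'a \<Rightarrow> real"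
  assumes f: "integrable M f" and A: "A \<in> sets M" and fin: "emeasure M A < \<infinity>"
    and b: "\<forall>x\<in>A. \<bar>f x - c\<bar> \<le> k"
  shows "\<bar>set_lebesgue_integral M A f - c * measure M A\<bar> \<le> k * measure M A"
proof -
  have iA: "integrable M (indicat_real A)" using A fin by (rule integrable_real_indicator)
  have i1: "integrable M (\<lambda>x. indicat_real A x * f x)"
    using integrable_mult_indicator[OF A f] by simp
  have i2: "integrable M (\<lambda>x. indicat_real A x * c)" using iA by (rule integrable_mult_left)
  have i3: "integrable M (\<lambda>x. indicat_real A x * k)" using iA by (rule integrable_mult_left)
  have sp: "A \<inter> space M = A" using sets.sets_into_space[OF A] by blast
  have e1: "set_lebesgue_integral M A f = (LINT x|M. indicat_real A x * f x)"
    by (simp add: set_lebesgue_integral_def)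
  have e2: "c * measure M A = (LINT x|M. indicat_real A x * c)"
    by (simp add: integral_indicator sp)
  have e3: "k * measure M A = (LINT x|M. indicat_real A x * k)"
    by (simp add: integral_indicator sp)
  have "set_lebesgue_integral M A f - c * measure M A = (LINT x|M. indicat_real A x * f x - indicat_real A x * c)"
    unfolding e1 e2 using i1 i2 by (rule Bochner_Integration.integral_diff[symmetric])
  also have "norm \<dots> \<le> (LINT x|M. norm (indicat_real A x * f x - indicat_real A x * c))"
    by (rule integral_norm_bound)
  also have "\<dots> \<le> (LINT x|M. indicat_real A x * k)"
  proof (rule integral_mono)
    show "integrable M (\<lambda>x. norm (indicat_real A x * f x - indicat_real A x * c))" using i1 i2 by simp
    show "integrable M (\<lambda>x. indicat_real A x * k)" by (rule i3)
    fix x assume "x \<in> space M" show "norm (indicat_real A x * f x - indicat_real A x * c) \<le> indicat_real A x * k"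
      using b by (cases "x \<in> A") (auto simp: indicator_def algebra_simps)
  qed
  finally show ?thesis unfolding e3 by simp
qed

lemma halving:
  fixes F :: "'a::metric_space set"
  assumes mid: "\<forall>x\<in>F. \<forall>y\<in>F. \<exists>z\<in>F. dist x z = dist x y / 2 \<and> dist z y = dist x y / 2"
    and r: "\<rho> \<in> F" and x: "x \<in> F"
  shows "\<exists>z\<in>F. dist \<rho> z = dist \<rho> x / 2 ^ k \<and> dist z x \<le> dist \<rho> x - dist \<rho> x / 2 ^ k"
proof (induction k)
  case 0 then show ?case using x by auto
next
  case (Suc k)
  then obtain z where z: "z \<in> F" "dist \<rho> z = dist \<rho> x / 2 ^ k" "dist z x \<le> dist \<rho> x - dist \<rho> x / 2 ^ k"
    by blast
  obtain w where w: "w \<in> F" "dist \<rho> w = dist \<rho> z / 2" "dist w z = dist \<rho> z / 2"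
    using mid r z(1) by blast
  have "dist w x \<le> dist w z + dist z x" by (rule dist_triangle)
  also have "\<dots> \<le> dist \<rho> x - dist \<rho> x / 2 ^ Suc k" using w z by simp
  finally show ?case using w z by (intro bexI[of _ w]) auto
qed

lemma far_point:
  fixes F :: "'a::metric_space set"
  assumes mid: "\<forall>x\<in>F. \<forall>y\<in>F. \<exists>z\<in>F. dist x z = dist x y / 2 \<and> dist z y = dist x y / 2"
    and r: "\<rho> \<in> F" and x: "x \<in> F" and R: "0 < R" "R \<le> dist \<rho> x"
  shows "\<exists>z\<in>F. R / 2 \<le> dist \<rho> z \<and> dist \<rho> z < R \<and> dist z x \<le> dist \<rho> x - dist \<rho> z"
proof -
  define D where "D = dist \<rho> x"
  have D: "0 < D" "R \<le> D" using R unfolding D_def by auto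
  obtain k0 where "D / R < 2 ^ k0" using real_arch_pow[of 2 "D / R"] by auto
  then have ex: "D / 2 ^ k0 < R" using R by (simp add: field_simps)
  define k where "k = (LEAST k. D / 2 ^ k < R)"
  have k: "D / 2 ^ k < R" unfolding k_def by (rule LeastI[of _ k0]) (rule ex)
  have "k \<noteq> 0"
  proof
    assume "k = 0" then show False using k D by simp
  qed
  then obtain j where j: "k = Suc j" by (cases k) auto
  have "\<not> D / 2 ^ j < R"
  proof
    assume "D / 2 ^ j < R"
    then have "k \<le> j" unfolding k_def by (rule Least_le)
    then show False using j by simp
  qed
  then have "R / 2 \<le> D / 2 ^ k" using j by (simp add: field_simps)
  moreover obtain z where "z \<in> F" "dist \<rho> z = D / 2 ^ k" "dist z x \<le> D - D / 2 ^ k"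
    using halving[OF mid r x, of k] unfolding D_def by blast
  ultimately show ?thesis using k unfolding D_def by (intro bexI[of _ z]) auto
qed

lemma g_infdist:
  fixes x :: "'a::metric_space"
  assumes "V \<noteq> {}" "\<forall>v\<in>V. dist x g \<le> dist x v"
  shows "dist x g \<le> infdist x V"
  using assms unfolding infdist_def by (auto intro!: cINF_greatest)

lemma infdist_obtain:
  fixes x :: "'a::metric_space"
  assumes "V \<noteq> {}" "infdist x V < e"
  shows "\<exists>v\<in>V. dist x v < e"
  using assms unfolding infdist_def by (simp add: cINF_less_iff)

lemma hitprob_fin:
  assumes w: "wgraph V mu" and S: "finite S" and sub: "{y. stepprob mu m x y \<noteq> 0} \<subseteq> S"
  shows "hitprob mu m x A = (\<Sum>y\<in>A \<inter> S. stepprob mu m x y)"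
proof -
  have "hitprob mu m x A = infsum (stepprob mu m x) (A \<inter> S)"
    unfolding hitprob_def by (rule infsum_cong_neutral) (use sub in auto)
  then show ?thesis using S by simp
qed

lemma hitavg:
  assumes w: "wgraph V mu" and x: "x \<in> V"
  shows "ennreal ((hitprob mu m x A + hitprob mu (Suc m) x A) / 2)
       = (\<integral>\<^sup>+y. ennreal (qdens mu m x y * wdeg mu y) \<partial>count_space (A \<inter> V))"
proof -
  define S where "S = {y. stepprob mu m x y \<noteq> 0} \<union> {y. stepprob mu (Suc m) x y \<noteq> 0}"
  have S: "finite S" unfolding S_def using stepprob_supp_fin[OF w] by blast
  have SV: "S \<subseteq> V" unfolding S_def using stepprob_supp_V[OF w x] by blast
  have "(hitprob mu m x A + hitprob mu (Suc m) x A) / 2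
      = ((\<Sum>y\<in>A \<inter> S. stepprob mu m x y) + (\<Sum>y\<in>A \<inter> S. stepprob mu (Suc m) x y)) / 2"
    using hitprob_fin[OF w S, of m x A] hitprob_fin[OF w S, of "Suc m" x A] unfolding S_def by auto
  also have "\<dots> = (\<Sum>y\<in>A \<inter> S. stepprob mu m x y + stepprob mu (Suc m) x y) / 2"
    by (simp add: sum.distrib)
  also have "\<dots> = (\<Sum>y\<in>A \<inter> S. (stepprob mu m x y + stepprob mu (Suc m) x y) / 2)"
    by (rule sum_divide_distrib)
  also have "\<dots> = (\<Sum>y\<in>A \<inter> S. qdens mu m x y * wdeg mu y)"
    unfolding qdens_def stepprob_eq[OF w x]
    by (rule sum.cong) (auto simp: algebra_simps)
  finally have eq: "(hitprob mu m x A + hitprob mu (Suc m) x A) / 2 = (\<Sum>y\<in>A \<inter> S. qdens mu m x y * wdeg mu y)" .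
  have nn: "\<And>y. 0 \<le> qdens mu m x y * wdeg mu y"
    using qdens_nonneg[OF w] wdeg_nonneg[OF w] by simp
  have "(\<integral>\<^sup>+y. ennreal (qdens mu m x y * wdeg mu y) \<partial>count_space (A \<inter> V))
      = (\<Sum>y\<in>A \<inter> S. ennreal (qdens mu m x y * wdeg mu y))"
  proof (rule nn_integral_count_space')
    show "finite (A \<inter> S)" using S by simp
    show "A \<inter> S \<subseteq> A \<inter> V" using SV by blast
    fix y assume "y \<in> A \<inter> V" "y \<notin> A \<inter> S"
    then have "stepprob mu m x y = 0" "stepprob mu (Suc m) x y = 0" unfolding S_def by auto
    then show "ennreal (qdens mu m x y * wdeg mu y) = 0" by (simp add: qdens_def pdens_def)
  qed
  also have "\<dots> = ennreal (\<Sum>y\<in>A \<inter> S. qdens mu m x y * wdeg mu y)"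
    using nn by (simp add: sum_ennreal)
  finally show ?thesis using eq by simp
qed

lemma hit_bounds:
  assumes w: "wgraph V mu" and x: "x \<in> V" and gm: "gmeas V mu A = ennreal M" and M: "0 \<le> M"
    and c: "0 \<le> c" and k: "0 \<le> k"
    and b: "\<forall>y\<in>A \<inter> V. \<bar>qdens mu m x y - c\<bar> \<le> k"
  shows "\<bar>(hitprob mu m x A + hitprob mu (Suc m) x A) / 2 - c * M\<bar> \<le> k * M"
proof -
  define h where "h = (hitprob mu m x A + hitprob mu (Suc m) x A) / 2"
  have h0: "0 \<le> h" unfolding h_def hitprob_def
    using stepprob_nonneg[OF w] by (auto intro!: infsum_nonneg add_nonneg_nonneg)
  have hI: "ennreal h = (\<integral>\<^sup>+y. ennreal (qdens mu m x y * wdeg mu y) \<partial>count_space (A \<inter> V))"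
    unfolding h_def by (rule hitavg[OF w x])
  have gmI: "gmeas V mu A = (\<integral>\<^sup>+y. ennreal (wdeg mu y) \<partial>count_space (A \<inter> V))"
    unfolding gmeas_def ..
  have "ennreal h \<le> (\<integral>\<^sup>+y. ennreal (c + k) * ennreal (wdeg mu y) \<partial>count_space (A \<inter> V))"
    unfolding hI
  proof (rule nn_integral_mono)
    fix y assume "y \<in> space (count_space (A \<inter> V))"
    then have "qdens mu m x y \<le> c + k" using b by force
    then have "qdens mu m x y * wdeg mu y \<le> (c + k) * wdeg mu y"
      using wdeg_nonneg[OF w] by (intro mult_right_mono) auto
    then have A: "ennreal (qdens mu m x y * wdeg mu y) \<le> ennreal ((c + k) * wdeg mu y)"
      by (rule ennreal_leI)
    have B: "ennreal ((c + k) * wdeg mu y) = ennreal (c + k) * ennreal (wdeg mu y)"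
      using c k wdeg_nonneg[OF w] by (intro ennreal_mult) auto
    show "ennreal (qdens mu m x y * wdeg mu y) \<le> ennreal (c + k) * ennreal (wdeg mu y)"
      using A unfolding B .
  qed
  also have "\<dots> = ennreal (c + k) * gmeas V mu A"
    unfolding gmI by (rule nn_integral_cmult) simp
  also have "\<dots> = ennreal ((c + k) * M)" using gm c k M by (simp add: ennreal_mult)
  finally have up: "h \<le> (c + k) * M" using c k M by (simp add: ennreal_le_iff)
  have "ennreal (max (c - k) 0) * gmeas V mu A
      = (\<integral>\<^sup>+y. ennreal (max (c - k) 0) * ennreal (wdeg mu y) \<partial>count_space (A \<inter> V))"
    unfolding gmI by (rule nn_integral_cmult[symmetric]) simp
  also have "\<dots> \<le> ennreal h"
    unfolding hI
  proof (rule nn_integral_mono)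
    fix y assume "y \<in> space (count_space (A \<inter> V))"
    then have "max (c - k) 0 \<le> qdens mu m x y" using b qdens_nonneg[OF w] by force
    then have "max (c - k) 0 * wdeg mu y \<le> qdens mu m x y * wdeg mu y"
      using wdeg_nonneg[OF w] by (intro mult_right_mono) auto
    then have A: "ennreal (max (c - k) 0 * wdeg mu y) \<le> ennreal (qdens mu m x y * wdeg mu y)"
      by (rule ennreal_leI)
    have B: "ennreal (max (c - k) 0 * wdeg mu y) = ennreal (max (c - k) 0) * ennreal (wdeg mu y)"
      using wdeg_nonneg[OF w] by (intro ennreal_mult) auto
    show "ennreal (max (c - k) 0) * ennreal (wdeg mu y) \<le> ennreal (qdens mu m x y * wdeg mu y)"
      using A unfolding B .
  qed
  finally have "ennreal (max (c - k) 0 * M) \<le> ennreal h" using gm M by (simp add: ennreal_mult)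
  then have lo: "max (c - k) 0 * M \<le> h" using h0 by (simp add: ennreal_le_iff)
  have "(c - k) * M \<le> max (c - k) 0 * M" using M by (intro mult_right_mono) auto
  then show ?thesis using up lo unfolding h_def[symmetric] by (auto simp: algebra_simps abs_le_iff)
qed

lemma floor_shift:
  fixes g t :: real
  assumes "0 < g" "0 \<le> t"
  shows "nat \<lfloor>g * (t + 1 / g)\<rfloor> = Suc (nat \<lfloor>g * t\<rfloor>)"
proof -
  have "g * (t + 1 / g) = g * t + 1" using assms by (simp add: field_simps)
  moreover have "0 \<le> \<lfloor>g * t\<rfloor>" using assms by simp
  ultimately show ?thesis by (simp add: nat_add_distrib)
qed

lemma final_arith:
  fixes Q qv hav m Vc \<kappa> \<eta> \<theta> Cq \<epsilon> :: real
  assumes h1: "\<bar>hav - Q * m\<bar> \<le> \<kappa> * m" and h2: "\<bar>hav - qv * Vc\<bar> \<le> \<eta> + \<kappa> * Vc"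
    and h3: "\<bar>m - Vc\<bar> < \<theta>" and th: "\<theta> \<le> Vc / 2" "\<theta> * (Cq + 1) \<le> \<epsilon> * Vc / 16"
    and Cq: "\<bar>qv\<bar> \<le> Cq" and Vc: "0 < Vc" and eta: "\<eta> = \<epsilon> * Vc / 16"
    and ka: "0 \<le> \<kappa>" "\<kappa> \<le> \<epsilon> / 16" and e: "0 < \<epsilon>"
  shows "\<bar>Q - qv\<bar> < \<epsilon>"
proof -
  have m: "Vc / 2 < m" using h3 th by auto
  have mpos: "0 < m" using m Vc by simp
  have "\<bar>qv * (Vc - m)\<bar> \<le> Cq * \<theta>"
  proof -
    have "\<bar>qv * (Vc - m)\<bar> = \<bar>qv\<bar> * \<bar>Vc - m\<bar>" by (simp add: abs_mult)
    also have "\<dots> \<le> Cq * \<theta>" using Cq h3 by (intro mult_mono) auto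
    finally show ?thesis .
  qed
  moreover have "Cq * \<theta> \<le> \<epsilon> * Vc / 16"
  proof -
    have "0 \<le> \<theta>" using h3 by simp
    then have "Cq * \<theta> \<le> (Cq + 1) * \<theta>" by (simp add: algebra_simps)
    then show ?thesis using th(2) by (simp add: algebra_simps)
  qed
  moreover have "Q * m - qv * m = (Q * m - hav) + (hav - qv * Vc) + qv * (Vc - m)"
    by (simp add: algebra_simps)
  ultimately have "\<bar>Q * m - qv * m\<bar> \<le> \<kappa> * m + (\<eta> + \<kappa> * Vc) + \<epsilon> * Vc / 16"
    using h1 h2 by (smt (verit))
  moreover have "\<kappa> * Vc \<le> \<epsilon> * Vc / 16"
    using mult_right_mono[OF ka(2), of Vc] Vc by simp
  moreover have "\<bar>Q * m - qv * m\<bar> = \<bar>Q - qv\<bar> * m"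
    using mpos by (simp add: abs_mult left_diff_distrib[symmetric])
  ultimately have A: "\<bar>Q - qv\<bar> * m \<le> \<kappa> * m + 3 * (\<epsilon> * Vc / 16)"
    using eta by linarith
  have B: "\<epsilon> * Vc < \<epsilon> * (2 * m)" using m e by (intro mult_strict_left_mono) auto
  have "\<bar>Q - qv\<bar> * m < \<kappa> * m + 3 * (\<epsilon> * (2 * m) / 16)" using A B by linarith
  also have "\<dots> = (\<kappa> + 3 * \<epsilon> / 8) * m" by (simp add: algebra_simps)
  finally have "\<bar>Q - qv\<bar> * m < (\<kappa> + 3 * \<epsilon> / 8) * m" .
  then have "\<bar>Q - qv\<bar> < \<kappa> + 3 * \<epsilon> / 8" using mpos by simp
  then show ?thesis using ka e by simp
qed

lemma time_tail:
  fixes V :: "nat \<Rightarrow> 'a set" and \<mu> :: "nat \<Rightarrow> 'a \<Rightarrow> 'a \<Rightarrow> real"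
  assumes graphs: "\<forall>n\<ge>1. wgraph (V n) (\<mu> n) \<and> \<rho> \<in> V n"
    and nn: "\<forall>n. 0 \<le> \<beta> n \<and> 0 \<le> \<gamma> n" and e: "0 \<le> e"
    and hT: "\<forall>\<^sub>F n in sequentially. \<forall>v\<in>V n. \<beta> n * qdens (\<mu> n) (nat \<lfloor>\<gamma> n * T\<rfloor>) \<rho> v \<le> e"
  shows "\<forall>\<^sub>F n in sequentially. \<forall>v\<in>V n. \<forall>t\<ge>T. \<beta> n * qdens (\<mu> n) (nat \<lfloor>\<gamma> n * t\<rfloor>) \<rho> v \<le> e"
  using hT eventually_ge_at_top[of 1]
proof eventually_elim
  case (elim n)
  then have w: "wgraph (V n) (\<mu> n)" using graphs by auto
  show ?case
  proof (intro ballI allI impI)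
    fix v t assume v: "v \<in> V n" and t: "T \<le> t"
    show "\<beta> n * qdens (\<mu> n) (nat \<lfloor>\<gamma> n * t\<rfloor>) \<rho> v \<le> e"
    proof (cases "\<beta> n = 0")
      case True then show ?thesis using e by simp
    next
      case False
      then have b: "0 < \<beta> n" using nn by (metis less_eq_real_def)
      have "\<forall>z\<in>V n. qdens (\<mu> n) (nat \<lfloor>\<gamma> n * T\<rfloor>) \<rho> z \<le> e / \<beta> n"
        using elim(1) b by (auto simp: field_simps mult.commute)
      then have all: "\<forall>z\<in>V n. qdens (\<mu> n) (nat \<lfloor>\<gamma> n * T\<rfloor> + k) \<rho> z \<le> e / \<beta> n" for k
        using qdens_mono[OF w] e b by simp
      have "nat \<lfloor>\<gamma> n * T\<rfloor> \<le> nat \<lfloor>\<gamma> n * t\<rfloor>"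
        using t nn by (intro nat_mono floor_mono mult_left_mono) auto
      then obtain k where "nat \<lfloor>\<gamma> n * t\<rfloor> = nat \<lfloor>\<gamma> n * T\<rfloor> + k" using le_Suc_ex by blast
      then have "qdens (\<mu> n) (nat \<lfloor>\<gamma> n * t\<rfloor>) \<rho> v \<le> e / \<beta> n" using all v by metis
      then show ?thesis using b by (simp add: field_simps mult.commute)
    qed
  qed
qed

lemma space_tail:
  fixes F :: "'a::metric_space set" and V :: "nat \<Rightarrow> 'a set" and \<mu> :: "nat \<Rightarrow> 'a \<Rightarrow> 'a \<Rightarrow> real"
  assumes graphs: "\<forall>n\<ge>1. wgraph (V n) (\<mu> n) \<and> \<rho> \<in> V n"
    and rho_F: "\<rho> \<in> F"
    and anonneg: "\<forall>n. 0 \<le> \<alpha> n"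
    and g_min: "\<forall>n\<ge>1. \<forall>x\<in>F. g n x \<in> V n \<and> (\<forall>v\<in>V n. dist x (g n x) \<le> dist x v)"
    and c1: "0 < c1" and lower: "\<forall>n\<ge>1. \<forall>x\<in>V n. \<forall>y\<in>V n. real (gdist (\<mu> n) x y) \<ge> c1 * \<alpha> n * dist x y"
    and A1b: "\<forall>r>0. \<forall>\<epsilon>>0. \<forall>\<^sub>F n in sequentially. \<forall>x\<in>F \<inter> ball \<rho> r. infdist x (V n) \<le> \<epsilon>"
    and mid: "\<forall>x\<in>F. \<forall>y\<in>F. \<exists>z\<in>F. dist x z = dist x y / 2 \<and> dist z y = dist x y / 2"
    and R': "0 < R'"
  shows "\<exists>R0\<ge>Rl. 0 < R0 \<and> (\<forall>\<^sub>F n in sequentially. \<forall>x\<in>F. R0 \<le> dist \<rho> x \<longrightarrow>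
            g n x \<in> V n - gball (V n) (\<mu> n) \<rho> (\<alpha> n * R'))"
proof -
  define R0 where "R0 = max Rl (2 * (R' / c1) + 4)"
  have p: "0 < R' / c1" using R' c1 by simp
  have "2 * (R' / c1) + 4 \<le> R0" "Rl \<le> R0" unfolding R0_def by auto
  then have R0: "Rl \<le> R0" "0 < R0" "R' / c1 \<le> R0 / 2 - 2" using p by auto
  have ev: "\<forall>\<^sub>F n in sequentially. \<forall>x\<in>F \<inter> ball \<rho> R0. infdist x (V n) \<le> 1"
    using A1b R0 by auto
  have "\<forall>\<^sub>F n in sequentially. \<forall>x\<in>F. R0 \<le> dist \<rho> x \<longrightarrow> g n x \<in> V n - gball (V n) (\<mu> n) \<rho> (\<alpha> n * R')"
    using ev eventually_ge_at_top[of 1]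
  proof eventually_elim
    case (elim n)
    show ?case
    proof (intro ballI impI)
      fix x assume x: "x \<in> F" and xR: "R0 \<le> dist \<rho> x"
      have gx: "g n x \<in> V n" and gmin: "\<forall>v\<in>V n. dist x (g n x) \<le> dist x v"
        using g_min elim x by auto
      have rV: "\<rho> \<in> V n" using graphs elim by auto
      obtain z where z: "z \<in> F" "R0 / 2 \<le> dist \<rho> z" "dist \<rho> z < R0" "dist z x \<le> dist \<rho> x - dist \<rho> z"
        using far_point[OF mid rho_F x R0(2) xR] by blast
      have "z \<in> F \<inter> ball \<rho> R0" using z by auto
      then have "infdist z (V n) \<le> 1" using elim(1) by blast
      then have "infdist z (V n) < 2" by simp
      then obtain v where v: "v \<in> V n" "dist z v < 2" using infdist_obtain[of "V n" z 2] rV by blast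
      have "dist x (g n x) \<le> dist x v" using gmin v by auto
      also have "\<dots> \<le> dist x z + dist z v" by (rule dist_triangle)
      finally have "dist x (g n x) < dist \<rho> x - dist \<rho> z + 2" using z v by (simp add: dist_commute)
      moreover have "dist \<rho> x \<le> dist \<rho> (g n x) + dist (g n x) x" by (rule dist_triangle)
      ultimately have d: "R' / c1 \<le> dist \<rho> (g n x)" using z R0 by (simp add: dist_commute)
      have "\<alpha> n * R' = c1 * \<alpha> n * (R' / c1)" using c1 by simp
      also have "\<dots> \<le> c1 * \<alpha> n * dist \<rho> (g n x)"
        using d c1 anonneg by (intro mult_left_mono) auto
      also have "\<dots> \<le> real (gdist (\<mu> n) \<rho> (g n x))" using lower elim rV gx by auto
      finally show "g n x \<in> V n - gball (V n) (\<mu> n) \<rho> (\<alpha> n * R')"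
        using gx unfolding gball_def by auto
    qed
  qed
  then show ?thesis using R0 by blast
qed

lemma lin_bound:
  fixes a d D c C :: real
  assumes "0 \<le> a" "0 \<le> d" "d \<le> D" "c \<le> C" "0 \<le> C"
  shows "c * a * d \<le> C * a * D"
proof -
  have "c * a * d = c * (a * d)" by simp
  also have "\<dots> \<le> C * (a * d)" using assms by (intro mult_right_mono) auto
  also have "\<dots> \<le> C * (a * D)" using assms by (intro mult_left_mono mult_left_mono) auto
  finally show ?thesis by simp
qed

lemma equicont:
  fixes F :: "'a::metric_space set" and V :: "nat \<Rightarrow> 'a set" and \<mu> :: "nat \<Rightarrow> 'a \<Rightarrow> 'a \<Rightarrow> real"
    and \<alpha> \<beta> \<gamma> :: "nat \<Rightarrow> real" and g :: "nat \<Rightarrow> 'a \<Rightarrow> 'a"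
  assumes graphs: "\<forall>n\<ge>1. wgraph (V n) (\<mu> n) \<and> \<rho> \<in> V n"
    and anonneg: "\<forall>n. 0 \<le> \<alpha> n"
    and alpha_lim: "filterlim \<alpha> at_top sequentially"
    and g_min: "\<forall>n\<ge>1. \<forall>x\<in>F. g n x \<in> V n \<and> (\<forall>v\<in>V n. dist x (g n x) \<le> dist x v)"
    and A1a_upper: "\<exists>\<alpha>' :: nat \<Rightarrow> real. (\<forall>n. 0 \<le> \<alpha>' n) \<and> \<alpha>' \<in> o(\<alpha>) \<and>
                      (\<forall>r>0. \<exists>c2 n0. \<forall>n\<ge>n0. \<forall>x\<in>V n \<inter> ball \<rho> r. \<forall>y\<in>V n \<inter> ball \<rho> r.
                         real (gdist (\<mu> n) x y) \<le> c2 * \<alpha> n * dist x y + \<alpha>' n)"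
    and A1b: "\<forall>r>0. \<forall>\<epsilon>>0. \<forall>\<^sub>F n in sequentially. \<forall>x\<in>F \<inter> ball \<rho> r. infdist x (V n) \<le> \<epsilon>"
    and A2: "\<forall>a b r. 0 < a \<longrightarrow> 0 < r \<longrightarrow> (\<forall>\<epsilon>>0. \<exists>\<delta>>0. \<forall>\<^sub>F n in sequentially.
                \<forall>x\<in>gball (V n) (\<mu> n) \<rho> (\<alpha> n * r). \<forall>y\<in>gball (V n) (\<mu> n) \<rho> (\<alpha> n * r).
                  real (gdist (\<mu> n) x y) \<le> \<alpha> n * \<delta> \<longrightarrow>
                  (\<forall>t\<in>{a..b}. \<beta> n * \<bar>qdens (\<mu> n) (nat \<lfloor>\<gamma> n * t\<rfloor>) \<rho> x
                                     - qdens (\<mu> n) (nat \<lfloor>\<gamma> n * t\<rfloor>) \<rho> y\<bar> \<le> \<epsilon>))"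
    and T1: "0 < T1" and ka: "0 < \<kappa>" and r0: "0 < r0" and R0: "0 \<le> R0"
  shows "\<exists>r>0. r \<le> r0 \<and> (\<forall>\<^sub>F n in sequentially. \<forall>x\<in>F \<inter> cball \<rho> R0. g n x \<in> V n \<and>
           (\<forall>y\<in>V n. dist x y < 3 * r / 2 \<longrightarrow> (\<forall>t\<in>{T1..T}.
              \<beta> n * \<bar>qdens (\<mu> n) (nat \<lfloor>\<gamma> n * t\<rfloor>) \<rho> (g n x) - qdens (\<mu> n) (nat \<lfloor>\<gamma> n * t\<rfloor>) \<rho> y\<bar> \<le> \<kappa>)))"
proof -
  obtain \<alpha>' :: "nat \<Rightarrow> real" where a'0: "\<forall>n. 0 \<le> \<alpha>' n" and ao: "\<alpha>' \<in> o(\<alpha>)"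
    and up: "\<forall>r>0. \<exists>c2 n0. \<forall>n\<ge>n0. \<forall>x\<in>V n \<inter> ball \<rho> r. \<forall>y\<in>V n \<inter> ball \<rho> r.
                         real (gdist (\<mu> n) x y) \<le> c2 * \<alpha> n * dist x y + \<alpha>' n"
    using A1a_upper by blast
  obtain c2 n0 where c2: "\<forall>n\<ge>n0. \<forall>x\<in>V n \<inter> ball \<rho> (R0 + 2). \<forall>y\<in>V n \<inter> ball \<rho> (R0 + 2).
                         real (gdist (\<mu> n) x y) \<le> c2 * \<alpha> n * dist x y + \<alpha>' n"
    using up R0 by (metis add_nonneg_pos zero_less_numeral)
  define C2 where "C2 = \<bar>c2\<bar> + 1"
  have C2: "c2 \<le> C2" "0 < C2" unfolding C2_def by auto
  define R1 where "R1 = C2 * (R0 + 2) + 1"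
  have R1: "0 < R1" unfolding R1_def using C2 R0 by (simp add: add_pos_nonneg)
  obtain \<delta> where d: "\<delta> > 0" and evA2: "\<forall>\<^sub>F n in sequentially.
                \<forall>x\<in>gball (V n) (\<mu> n) \<rho> (\<alpha> n * R1). \<forall>y\<in>gball (V n) (\<mu> n) \<rho> (\<alpha> n * R1).
                  real (gdist (\<mu> n) x y) \<le> \<alpha> n * \<delta> \<longrightarrow>
                  (\<forall>t\<in>{T1..T}. \<beta> n * \<bar>qdens (\<mu> n) (nat \<lfloor>\<gamma> n * t\<rfloor>) \<rho> x
                                     - qdens (\<mu> n) (nat \<lfloor>\<gamma> n * t\<rfloor>) \<rho> y\<bar> \<le> \<kappa>)"
    using A2 T1 R1 ka by blast
  define r where "r = min r0 (min (1/2) (\<delta> / (8 * C2)))"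
  have r: "0 < r" "r \<le> r0" "r \<le> 1/2" "r \<le> \<delta> / (8 * C2)"
    unfolding r_def using r0 d C2 by auto
  have rC: "C2 * (2 * r) \<le> \<delta> / 4"
  proof -
    have "C2 * r \<le> C2 * (\<delta> / (8 * C2))" using r C2 by (intro mult_left_mono) auto
    also have "\<dots> = \<delta> / 8" using C2 by simp
    finally show ?thesis by simp
  qed
  define cc where "cc = min (1/2) (\<delta> / 2)"
  have cc: "0 < cc" "cc \<le> 1/2" "cc \<le> \<delta> / 2" unfolding cc_def using d by auto
  have eva: "\<forall>\<^sub>F n in sequentially. 0 < \<alpha> n"
    using alpha_lim unfolding filterlim_at_top_dense by blast
  have evo: "\<forall>\<^sub>F n in sequentially. \<alpha>' n \<le> cc * \<bar>\<alpha> n\<bar>"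
    using landau_o.smallD_nonneg_real[OF ao _ cc(1)] a'0 by auto
  have evb: "\<forall>\<^sub>F n in sequentially. \<forall>x\<in>F \<inter> ball \<rho> (R0 + 1). infdist x (V n) \<le> r / 4"
    using A1b[rule_format, of "R0 + 1" "r / 4"] R0 r by simp
  have "\<forall>\<^sub>F n in sequentially. \<forall>x\<in>F \<inter> cball \<rho> R0. g n x \<in> V n \<and>
           (\<forall>y\<in>V n. dist x y < 3 * r / 2 \<longrightarrow> (\<forall>t\<in>{T1..T}.
              \<beta> n * \<bar>qdens (\<mu> n) (nat \<lfloor>\<gamma> n * t\<rfloor>) \<rho> (g n x) - qdens (\<mu> n) (nat \<lfloor>\<gamma> n * t\<rfloor>) \<rho> y\<bar> \<le> \<kappa>))"
    using eventually_ge_at_top[of "max 1 n0"] eva evo evb evA2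
  proof eventually_elim
    case (elim n)
    have n1: "n \<ge> 1" "n \<ge> n0" using elim(1) by auto
    have rV: "\<rho> \<in> V n" using graphs n1 by auto
    have an: "0 < \<alpha> n" using elim(2) .
    have a'n: "\<alpha>' n \<le> cc * \<alpha> n" using elim(3) an by simp
    show ?case
    proof (intro ballI conjI impI)
      fix x assume x: "x \<in> F \<inter> cball \<rho> R0"
      show gx: "g n x \<in> V n" using g_min n1 x by auto
      have gmin: "\<forall>v\<in>V n. dist x (g n x) \<le> dist x v" using g_min n1 x by auto
      have "x \<in> F \<inter> ball \<rho> (R0 + 1)" using x by auto
      then have "infdist x (V n) \<le> r / 4" using elim(4) by blast
      moreover have "dist x (g n x) \<le> infdist x (V n)" using g_infdist[OF _ gmin] rV by auto
      ultimately have dxg: "dist x (g n x) \<le> r / 4" by simp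
      have drx: "dist \<rho> x \<le> R0" using x by auto
      fix y assume y: "y \<in> V n" and dxy: "dist x y < 3 * r / 2"
      have "dist \<rho> (g n x) \<le> dist \<rho> x + dist x (g n x)" by (rule dist_triangle)
      then have drg: "dist \<rho> (g n x) < R0 + 2" using drx dxg r by simp
      have "dist \<rho> y \<le> dist \<rho> x + dist x y" by (rule dist_triangle)
      then have dry: "dist \<rho> y < R0 + 2" using drx dxy r by simp
      have "dist (g n x) y \<le> dist (g n x) x + dist x y" by (rule dist_triangle)
      then have dgy: "dist (g n x) y \<le> 2 * r" using dxg dxy r(1) by (simp add: dist_commute)
      have gxB: "g n x \<in> V n \<inter> ball \<rho> (R0 + 2)" using gx drg by auto
      have yB: "y \<in> V n \<inter> ball \<rho> (R0 + 2)" using y dry by auto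
      have rB: "\<rho> \<in> V n \<inter> ball \<rho> (R0 + 2)" using rV R0 by auto
      have "real (gdist (\<mu> n) (g n x) y) \<le> c2 * \<alpha> n * dist (g n x) y + \<alpha>' n"
        using c2 n1 gxB yB by blast
      also have "\<dots> \<le> C2 * \<alpha> n * (2 * r) + cc * \<alpha> n"
      proof -
        have "c2 * \<alpha> n * dist (g n x) y \<le> C2 * \<alpha> n * (2 * r)"
          by (rule lin_bound) (use an dgy C2 in auto)
        then show ?thesis using a'n by linarith
      qed
      also have "\<dots> = \<alpha> n * (C2 * (2 * r)) + cc * \<alpha> n" by simp
      also have "\<dots> \<le> \<alpha> n * (\<delta> / 4) + \<delta> / 2 * \<alpha> n"
        using rC cc an by (intro add_mono mult_left_mono mult_right_mono) auto
      also have "\<dots> \<le> \<alpha> n * \<delta>" using an d by (simp add: algebra_simps)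
      finally have gd: "real (gdist (\<mu> n) (g n x) y) \<le> \<alpha> n * \<delta>" .
      have gb: "real (gdist (\<mu> n) \<rho> z) < \<alpha> n * R1" if zB: "z \<in> V n \<inter> ball \<rho> (R0 + 2)" for z
      proof -
        have "real (gdist (\<mu> n) \<rho> z) \<le> c2 * \<alpha> n * dist \<rho> z + \<alpha>' n"
          using c2 n1 rB zB by blast
        also have "\<dots> \<le> C2 * \<alpha> n * (R0 + 2) + cc * \<alpha> n"
        proof -
          have "c2 * \<alpha> n * dist \<rho> z \<le> C2 * \<alpha> n * (R0 + 2)"
            by (rule lin_bound) (use an C2 zB in auto)
          then show ?thesis using a'n by linarith
        qed
        also have "\<dots> < C2 * \<alpha> n * (R0 + 2) + \<alpha> n"
          using cc an by (simp add: mult_less_cancel_right)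
        also have "\<dots> = \<alpha> n * R1" unfolding R1_def by (simp add: algebra_simps)
        finally show ?thesis .
      qed
      have "g n x \<in> gball (V n) (\<mu> n) \<rho> (\<alpha> n * R1)" using gb[OF gxB] gx unfolding gball_def by auto
      moreover have "y \<in> gball (V n) (\<mu> n) \<rho> (\<alpha> n * R1)" using gb[OF yB] y unfolding gball_def by auto
      ultimately have "\<forall>t\<in>{T1..T}. \<beta> n * \<bar>qdens (\<mu> n) (nat \<lfloor>\<gamma> n * t\<rfloor>) \<rho> (g n x)
                          - qdens (\<mu> n) (nat \<lfloor>\<gamma> n * t\<rfloor>) \<rho> y\<bar> \<le> \<kappa>"
        using elim(5) gd by blast
      then show "\<beta> n * \<bar>qdens (\<mu> n) (nat \<lfloor>\<gamma> n * t\<rfloor>) \<rho> (g n x)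
                          - qdens (\<mu> n) (nat \<lfloor>\<gamma> n * t\<rfloor>) \<rho> y\<bar> \<le> \<kappa>" if "t \<in> {T1..T}" for t
        using that by blast
    qed
  qed
  then show ?thesis using r by blast
qed

lemma avg_bound:
  fixes a b A B z \<eta> k :: real
  assumes "\<bar>a - A\<bar> < \<eta>" "\<bar>b - B\<bar> < \<eta>" "\<bar>A - z\<bar> \<le> k" "\<bar>B - z\<bar> \<le> k"
  shows "\<bar>(a + b) / 2 - z\<bar> \<le> \<eta> + k"
proof -
  have h: "a - A < \<eta>" "A - a < \<eta>" "b - B < \<eta>" "B - b < \<eta>" "A - z \<le> k" "z - A \<le> k"
      "B - z \<le> k" "z - B \<le> k"
    using assms by (simp_all add: abs_less_iff abs_le_iff)
  have "a + b < 2 * \<eta> + 2 * k + 2 * z" using h by linarith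
  then have 1: "(a + b) / 2 - z \<le> \<eta> + k" by (simp add: field_simps)
  have "2 * z < 2 * \<eta> + 2 * k + (a + b)" using h by linarith
  then have 2: "z - (a + b) / 2 \<le> \<eta> + k" by (simp add: field_simps)
  show ?thesis using 1 2 by (simp add: abs_le_iff)
qed

lemma core:
  fixes F :: "'a::metric_space set" and \<rho> c :: 'a and \<nu> :: "'a measure"
    and q :: "real \<Rightarrow> 'a \<Rightarrow> real"
    and V :: "nat \<Rightarrow> 'a set" and \<mu> :: "nat \<Rightarrow> 'a \<Rightarrow> 'a \<Rightarrow> real"
    and \<beta> \<gamma> :: "nat \<Rightarrow> real" and g :: "nat \<Rightarrow> 'a \<Rightarrow> 'a"
  assumes ev0: "\<forall>\<^sub>F n in sequentially. wgraph (V n) (\<mu> n) \<and> \<rho> \<in> V n \<and> 0 < \<beta> n \<and> 1 \<le> \<gamma> n \<and> 1 / \<gamma> n < h0"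
    and EQ: "\<forall>\<^sub>F n in sequentially. \<forall>x\<in>F \<inter> cball \<rho> R0. g n x \<in> V n \<and>
           (\<forall>y\<in>V n. dist x y < 3 * r / 2 \<longrightarrow> (\<forall>t\<in>{T1..T}.
              \<beta> n * \<bar>qdens (\<mu> n) (nat \<lfloor>\<gamma> n * t\<rfloor>) \<rho> (g n x) - qdens (\<mu> n) (nat \<lfloor>\<gamma> n * t\<rfloor>) \<rho> y\<bar> \<le> \<kappa>))"
    and UC: "\<forall>s\<in>{T1..T+1}. \<forall>t\<in>{T1..T}. \<forall>x\<in>F \<inter> cball \<rho> R0. \<forall>y\<in>F.
              \<bar>s - t\<bar> < h0 \<longrightarrow> dist y x < 3 * r / 2 \<longrightarrow> \<bar>q s y - q t x\<bar> \<le> \<kappa>"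
    and Cq: "\<forall>t\<in>{T1..T}. \<forall>x\<in>F \<inter> cball \<rho> R0. \<bar>q t x\<bar> \<le> Cq" and Cq0: "0 \<le> Cq"
    and T1: "0 < T1" and ka: "0 \<le> \<kappa>" "\<kappa> \<le> \<epsilon> / 16" and e: "0 < \<epsilon>" and r: "0 < r" and h0: "0 < h0"
    and qi: "\<forall>t>0. integrable \<nu> (q t)"
    and Aset: "F \<inter> ball c r \<in> sets \<nu>" and Apos: "0 < emeasure \<nu> (F \<inter> ball c r)"
    and Afin: "emeasure \<nu> (F \<inter> ball c r) < \<infinity>"
    and A1c: "((\<lambda>n. ennreal (1 / \<beta> n) * gmeas (V n) (\<mu> n) (ball c r))
                 \<longlongrightarrow> emeasure \<nu> (F \<inter> ball c r)) sequentially"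
    and A1d: "uniform_limit {T1..T+1}
                  (\<lambda>n t. hitprob (\<mu> n) (nat \<lfloor>\<gamma> n * t\<rfloor>) \<rho> (ball c r))
                  (\<lambda>t. set_lebesgue_integral \<nu> (F \<inter> ball c r) (q t)) sequentially"
  shows "\<forall>\<^sub>F n in sequentially. \<forall>x\<in>F \<inter> cball \<rho> R0 \<inter> ball c (r / 2). \<forall>t\<in>{T1..T}.
            \<bar>\<beta> n * qdens (\<mu> n) (nat \<lfloor>\<gamma> n * t\<rfloor>) \<rho> (g n x) - q t x\<bar> < \<epsilon>"
proof -
  define A where "A = F \<inter> ball c r"
  define Vc where "Vc = measure \<nu> A"
  have eA: "emeasure \<nu> A = ennreal Vc" unfolding Vc_def A_def using Afin
    by (simp add: emeasure_eq_ennreal_measure)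
  have Vc: "0 < Vc" using Apos eA unfolding A_def by simp
  define \<eta> where "\<eta> = \<epsilon> * Vc / 16"
  have eta: "0 < \<eta>" unfolding \<eta>_def using e Vc by simp
  define \<theta> where "\<theta> = min (Vc / 2) (\<epsilon> * Vc / (16 * (Cq + 1)))"
  have th: "0 < \<theta>" "\<theta> \<le> Vc / 2" "\<theta> * (Cq + 1) \<le> \<epsilon> * Vc / 16"
  proof -
    show "0 < \<theta>" unfolding \<theta>_def using Vc e Cq0 by simp
    show "\<theta> \<le> Vc / 2" unfolding \<theta>_def by (rule min.cobounded1)
    have "\<theta> * (Cq + 1) \<le> (\<epsilon> * Vc / (16 * (Cq + 1))) * (Cq + 1)"
      unfolding \<theta>_def using Cq0 by (intro mult_right_mono) auto
    also have "\<dots> = \<epsilon> * Vc / 16" using Cq0 by (simp add: field_simps)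
    finally show "\<theta> * (Cq + 1) \<le> \<epsilon> * Vc / 16" .
  qed
  define f where "f n = ennreal (1 / \<beta> n) * gmeas (V n) (\<mu> n) (ball c r)" for n
  have fl: "f \<longlonglongrightarrow> ennreal Vc" using A1c eA unfolding f_def A_def by simp
  have evfin: "\<forall>\<^sub>F n in sequentially. f n < ennreal (Vc + 1)"
    using order_tendstoD(2)[OF fl] Vc by (simp add: ennreal_lessI)
  have fl2: "(\<lambda>n. enn2real (f n)) \<longlonglongrightarrow> Vc" using tendsto_enn2real[OF fl] Vc by simp
  have evth: "\<forall>\<^sub>F n in sequentially. \<bar>enn2real (f n) - Vc\<bar> < \<theta>"
    using fl2 th(1) unfolding tendsto_iff dist_real_def by blast
  have evH: "\<forall>\<^sub>F n in sequentially. \<forall>t\<in>{T1..T+1}.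
      dist (hitprob (\<mu> n) (nat \<lfloor>\<gamma> n * t\<rfloor>) \<rho> (ball c r)) (set_lebesgue_integral \<nu> A (q t)) < \<eta>"
    using A1d eta unfolding uniform_limit_iff A_def by blast
  have Phi: "\<bar>set_lebesgue_integral \<nu> A (q s) - q t x * Vc\<bar> \<le> \<kappa> * Vc"
    if s: "s \<in> {T1..T+1}" and t: "t \<in> {T1..T}" and x: "x \<in> F \<inter> cball \<rho> R0 \<inter> ball c (r/2)"
      and st: "\<bar>s - t\<bar> < h0" for s t x
    unfolding Vc_def
  proof (rule set_int_approx)
    show "integrable \<nu> (q s)" using qi s T1 by auto
    show "A \<in> sets \<nu>" using Aset unfolding A_def .
    show "emeasure \<nu> A < \<infinity>" using Afin unfolding A_def .
    show "\<forall>y\<in>A. \<bar>q s y - q t x\<bar> \<le> \<kappa>"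
    proof
      fix y assume y: "y \<in> A"
      have "dist y x \<le> dist y c + dist c x" by (rule dist_triangle)
      also have "\<dots> < 3 * r / 2" using y x unfolding A_def by (simp add: dist_commute)
      finally show "\<bar>q s y - q t x\<bar> \<le> \<kappa>" using UC s t x st y unfolding A_def by blast
    qed
  qed
  show ?thesis
    using ev0 EQ evfin evth evH
  proof eventually_elim
    case (elim n)
    have w: "wgraph (V n) (\<mu> n)" and rV: "\<rho> \<in> V n" and b: "0 < \<beta> n" and gam: "1 \<le> \<gamma> n"
      and gh: "1 / \<gamma> n < h0" using elim(1) by auto
    have gm_fin: "gmeas (V n) (\<mu> n) (ball c r) \<noteq> \<top>"
    proof
      assume "gmeas (V n) (\<mu> n) (ball c r) = \<top>"
      then have "f n = \<top>" unfolding f_def using b by (simp add: ennreal_mult_top)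
      then show False using elim(3) by simp
    qed
    define Mn where "Mn = enn2real (gmeas (V n) (\<mu> n) (ball c r))"
    have Mn: "0 \<le> Mn" "gmeas (V n) (\<mu> n) (ball c r) = ennreal Mn"
      unfolding Mn_def using gm_fin by (auto simp: ennreal_enn2real_if)
    define m where "m = Mn / \<beta> n"
    have fm: "enn2real (f n) = m" unfolding f_def m_def Mn_def
      using b by (simp add: enn2real_mult)
    show ?case
    proof (intro ballI)
      fix x t assume x: "x \<in> F \<inter> cball \<rho> R0 \<inter> ball c (r / 2)" and t: "t \<in> {T1..T}"
      define mt where "mt = nat \<lfloor>\<gamma> n * t\<rfloor>"
      define gx where "gx = g n x"
      define Qd where "Qd = qdens (\<mu> n) mt \<rho> gx"
      have gx: "gx \<in> V n" using elim(2) x unfolding gx_def by auto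
      have bnd: "\<forall>y\<in>ball c r \<inter> V n. \<bar>qdens (\<mu> n) mt \<rho> y - Qd\<bar> \<le> \<kappa> / \<beta> n"
      proof
        fix y assume y: "y \<in> ball c r \<inter> V n"
        have "dist x y \<le> dist x c + dist c y" by (rule dist_triangle)
        also have "\<dots> < 3 * r / 2" using y x by (simp add: dist_commute)
        finally have "\<beta> n * \<bar>Qd - qdens (\<mu> n) mt \<rho> y\<bar> \<le> \<kappa>"
          using elim(2) x y t unfolding Qd_def mt_def gx_def by blast
        then show "\<bar>qdens (\<mu> n) mt \<rho> y - Qd\<bar> \<le> \<kappa> / \<beta> n"
          using b by (simp add: field_simps abs_minus_commute)
      qed
      define hav where "hav = (hitprob (\<mu> n) mt \<rho> (ball c r) + hitprob (\<mu> n) (Suc mt) \<rho> (ball c r)) / 2"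
      have hb: "\<bar>hav - Qd * Mn\<bar> \<le> \<kappa> / \<beta> n * Mn"
        unfolding hav_def
        by (rule hit_bounds[OF w rV Mn(2) Mn(1)]) (use qdens_nonneg[OF w] ka b bnd in \<open>auto simp: Qd_def\<close>)
      have hb2: "\<bar>hav - (\<beta> n * Qd) * m\<bar> \<le> \<kappa> * m"
        using hb b unfolding m_def by (simp add: field_simps)
      have t0: "0 \<le> t" using t T1 by simp
      have gp: "0 < \<gamma> n" using gam by simp
      have sh: "nat \<lfloor>\<gamma> n * (t + 1 / \<gamma> n)\<rfloor> = Suc mt"
        unfolding mt_def by (rule floor_shift[OF gp t0])
      have inv: "0 < 1 / \<gamma> n" "1 / \<gamma> n \<le> 1" using gam by auto
      have "T1 \<le> t + 1 / \<gamma> n" using t inv(1) by (simp only: atLeastAtMost_iff) linarith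
      moreover have "t + 1 / \<gamma> n \<le> T + 1" using t inv(2) by simp
      ultimately have s1: "t + 1 / \<gamma> n \<in> {T1..T+1}" by simp
      have t1: "t \<in> {T1..T+1}" using t by auto
      have H1: "\<bar>hitprob (\<mu> n) mt \<rho> (ball c r) - set_lebesgue_integral \<nu> A (q t)\<bar> < \<eta>"
        using elim(5) t1 unfolding mt_def dist_real_def by blast
      have H2: "\<bar>hitprob (\<mu> n) (Suc mt) \<rho> (ball c r) - set_lebesgue_integral \<nu> A (q (t + 1 / \<gamma> n))\<bar> < \<eta>"
        using elim(5) s1 sh unfolding dist_real_def by metis
      have P1: "\<bar>set_lebesgue_integral \<nu> A (q t) - q t x * Vc\<bar> \<le> \<kappa> * Vc"
        using Phi[OF t1 t x] h0 by simp
      have P2: "\<bar>set_lebesgue_integral \<nu> A (q (t + 1 / \<gamma> n)) - q t x * Vc\<bar> \<le> \<kappa> * Vc"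
        using Phi[OF s1 t x] inv gh by simp
      have h2: "\<bar>hav - q t x * Vc\<bar> \<le> \<eta> + \<kappa> * Vc"
        using avg_bound[OF H1 H2 P1 P2] unfolding hav_def .
      have mth: "\<bar>m - Vc\<bar> < \<theta>" using elim(4) fm by simp
      have cq: "\<bar>q t x\<bar> \<le> Cq" using Cq t x by blast
      have "\<bar>\<beta> n * Qd - q t x\<bar> < \<epsilon>"
        by (rule final_arith[OF hb2 h2 mth th(2) th(3) cq Vc \<eta>_def ka e])
      then show "\<bar>\<beta> n * qdens (\<mu> n) (nat \<lfloor>\<gamma> n * t\<rfloor>) \<rho> (g n x) - q t x\<bar> < \<epsilon>"
        unfolding Qd_def mt_def gx_def .
    qed
  qed
qed

theorem theorem1p2:
  fixes F :: "'a::metric_space set" and \<rho> :: 'a and \<nu> :: "'a measure"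
    and q :: "real \<Rightarrow> 'a \<Rightarrow> real"
    and V :: "nat \<Rightarrow> 'a set" and \<mu> :: "nat \<Rightarrow> 'a \<Rightarrow> 'a \<Rightarrow> real"
    and \<alpha> \<beta> \<gamma> :: "nat \<Rightarrow> real" and g :: "nat \<Rightarrow> 'a \<Rightarrow> 'a" and T1 :: real
  assumes F_compact: "\<forall>x r. 0 < r \<longrightarrow> compact (F \<inter> cball x r)"
    and rho_F: "\<rho> \<in> F"
    and nu_space: "space \<nu> = F"
    and nu_sets: "sets \<nu> = sets (restrict_space borel F)"
    and nu_radon: "\<forall>x r. emeasure \<nu> (F \<inter> cball x r) < \<infinity>"
    and nu_supp: "\<forall>x\<in>F. \<forall>r>0. 0 < emeasure \<nu> (F \<inter> ball x r)"
    and q_cont: "continuous_on ({0<..} \<times> F) (\<lambda>(t, x). q t x)"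
    and q_nonneg: "\<forall>t>0. \<forall>x\<in>F. 0 \<le> q t x"
    and q_int: "\<forall>t>0. integrable \<nu> (q t) \<and> (\<integral>x. q t x \<partial>\<nu>) = 1"
    and graphs: "\<forall>n\<ge>1. wgraph (V n) (\<mu> n) \<and> \<rho> \<in> V n"
    and seq_nonneg: "\<forall>n. 0 \<le> \<alpha> n \<and> 0 \<le> \<beta> n \<and> 0 \<le> \<gamma> n"
    and alpha_lim: "filterlim \<alpha> at_top sequentially"
    and beta_lim: "filterlim \<beta> at_top sequentially"
    and gamma_lim: "filterlim \<gamma> at_top sequentially"
    and g_min: "\<forall>n\<ge>1. \<forall>x\<in>F. g n x \<in> V n \<and> (\<forall>v\<in>V n. dist x (g n x) \<le> dist x v)"
    and T1_pos: "0 < T1"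
    and A1a_lower: "\<exists>c1>0. \<forall>n\<ge>1. \<forall>x\<in>V n. \<forall>y\<in>V n.
                      real (gdist (\<mu> n) x y) \<ge> c1 * \<alpha> n * dist x y"
    and A1a_upper: "\<exists>\<alpha>' :: nat \<Rightarrow> real. (\<forall>n. 0 \<le> \<alpha>' n) \<and> \<alpha>' \<in> o(\<alpha>) \<and>
                      (\<forall>r>0. \<exists>c2 n0. \<forall>n\<ge>n0. \<forall>x\<in>V n \<inter> ball \<rho> r. \<forall>y\<in>V n \<inter> ball \<rho> r.
                         real (gdist (\<mu> n) x y) \<le> c2 * \<alpha> n * dist x y + \<alpha>' n)"
    and A1b: "\<forall>r>0. \<forall>\<epsilon>>0. \<forall>\<^sub>F n in sequentially. \<forall>x\<in>F \<inter> ball \<rho> r. infdist x (V n) \<le> \<epsilon>"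
    and A1c: "\<forall>x\<in>F. \<forall>r>0. ((\<lambda>n. ennreal (1 / \<beta> n) * gmeas (V n) (\<mu> n) (ball x r))
                 \<longlongrightarrow> emeasure \<nu> (F \<inter> ball x r)) sequentially"
    and A1d: "\<forall>a b x r. 0 < a \<longrightarrow> x \<in> F \<longrightarrow> 0 < r \<longrightarrow>
                uniform_limit {a..b}
                  (\<lambda>n t. hitprob (\<mu> n) (nat \<lfloor>\<gamma> n * t\<rfloor>) \<rho> (ball x r))
                  (\<lambda>t. set_lebesgue_integral \<nu> (F \<inter> ball x r) (q t)) sequentially"
    and A2: "\<forall>a b r. 0 < a \<longrightarrow> 0 < r \<longrightarrow> (\<forall>\<epsilon>>0. \<exists>\<delta>>0. \<forall>\<^sub>F n in sequentially.
                \<forall>x\<in>gball (V n) (\<mu> n) \<rho> (\<alpha> n * r). \<forall>y\<in>gball (V n) (\<mu> n) \<rho> (\<alpha> n * r).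
                  real (gdist (\<mu> n) x y) \<le> \<alpha> n * \<delta> \<longrightarrow>
                  (\<forall>t\<in>{a..b}. \<beta> n * \<bar>qdens (\<mu> n) (nat \<lfloor>\<gamma> n * t\<rfloor>) \<rho> x
                                     - qdens (\<mu> n) (nat \<lfloor>\<gamma> n * t\<rfloor>) \<rho> y\<bar> \<le> \<epsilon>))"
    and midpoint: "\<forall>x\<in>F. \<forall>y\<in>F. \<exists>z\<in>F. dist x z = dist x y / 2 \<and> dist z y = dist x y / 2"
    and A3a_time: "\<forall>\<epsilon>>0. \<forall>\<^sub>F t in at_top. \<forall>x\<in>F. q t x \<le> \<epsilon>"
    and A3a_space: "\<forall>a b. 0 < a \<longrightarrow> (\<forall>\<epsilon>>0. \<forall>\<^sub>F r in at_top.
                      \<forall>x\<in>F - ball \<rho> r. \<forall>t\<in>{a..b}. q t x \<le> \<epsilon>)"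
    and A3b_time: "\<forall>\<epsilon>>0. \<forall>\<^sub>F t in at_top. \<forall>\<^sub>F n in sequentially.
                      \<forall>x\<in>V n. \<beta> n * qdens (\<mu> n) (nat \<lfloor>\<gamma> n * t\<rfloor>) \<rho> x \<le> \<epsilon>"
    and A3b_space: "\<forall>a b. 0 < a \<longrightarrow> (\<forall>\<epsilon>>0. \<forall>\<^sub>F r in at_top. \<forall>\<^sub>F n in sequentially.
                      \<forall>x\<in>V n - gball (V n) (\<mu> n) \<rho> (\<alpha> n * r). \<forall>t\<in>{a..b}.
                        \<beta> n * qdens (\<mu> n) (nat \<lfloor>\<gamma> n * t\<rfloor>) \<rho> x \<le> \<epsilon>)"
  shows "uniform_limit (F \<times> {T1..})
           (\<lambda>n (x, t). \<beta> n * qdens (\<mu> n) (nat \<lfloor>\<gamma> n * t\<rfloor>) \<rho> (g n x))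
           (\<lambda>(x, t). q t x) sequentially"
proof -
  have uli: "\<forall>\<^sub>F n in sequentially. \<forall>p\<in>F \<times> {T1..}.
      dist ((\<lambda>(x, t). \<beta> n * qdens (\<mu> n) (nat \<lfloor>\<gamma> n * t\<rfloor>) \<rho> (g n x)) p) ((\<lambda>(x, t). q t x) p) < \<epsilon>"
    if e: "0 < \<epsilon>" for \<epsilon>
  proof -
    have bnn: "\<forall>n. 0 \<le> \<beta> n" and gnn: "\<forall>n. 0 \<le> \<gamma> n" and ann: "\<forall>n. 0 \<le> \<alpha> n"
      using seq_nonneg by auto
    have ev1: "\<forall>\<^sub>F t in at_top. \<forall>x\<in>F. q t x \<le> \<epsilon> / 2" by (rule A3a_time[rule_format]) (use e in simp)
    have ev2: "\<forall>\<^sub>F t in at_top. \<forall>\<^sub>F n in sequentially.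
                      \<forall>x\<in>V n. \<beta> n * qdens (\<mu> n) (nat \<lfloor>\<gamma> n * t\<rfloor>) \<rho> x \<le> \<epsilon> / 2"
      by (rule A3b_time[rule_format]) (use e in simp)
    obtain N where N: "\<And>t. N \<le> t \<Longrightarrow> (\<forall>x\<in>F. q t x \<le> \<epsilon> / 2) \<and> (\<forall>\<^sub>F n in sequentially.
                      \<forall>x\<in>V n. \<beta> n * qdens (\<mu> n) (nat \<lfloor>\<gamma> n * t\<rfloor>) \<rho> x \<le> \<epsilon> / 2)"
      using eventually_conj[OF ev1 ev2] unfolding eventually_at_top_linorder by blast
    define T where "T = max N T1"
    have T: "T1 \<le> T" "N \<le> T" unfolding T_def by auto
    have qT: "\<forall>t\<ge>T. \<forall>x\<in>F. q t x \<le> \<epsilon> / 2"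
    proof (intro allI impI)
      fix t assume "T \<le> t"
      then have "N \<le> t" using T(2) by linarith
      then show "\<forall>x\<in>F. q t x \<le> \<epsilon> / 2" using N by blast
    qed
    have hT: "\<forall>\<^sub>F n in sequentially.
                      \<forall>x\<in>V n. \<beta> n * qdens (\<mu> n) (nat \<lfloor>\<gamma> n * T\<rfloor>) \<rho> x \<le> \<epsilon> / 2"
      using N[OF T(2)] by blast
    have evT: "\<forall>\<^sub>F n in sequentially. \<forall>v\<in>V n. \<forall>t\<ge>T. \<beta> n * qdens (\<mu> n) (nat \<lfloor>\<gamma> n * t\<rfloor>) \<rho> v \<le> \<epsilon> / 2"
      by (rule time_tail[OF graphs _ _ hT]) (use seq_nonneg e in auto)
    have ev3: "\<forall>\<^sub>F r in at_top. \<forall>x\<in>F - ball \<rho> r. \<forall>t\<in>{T1..T}. q t x \<le> \<epsilon> / 2"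
      by (rule A3a_space[rule_format, OF T1_pos]) (use e in simp)
    have ev4: "\<forall>\<^sub>F r in at_top. \<forall>\<^sub>F n in sequentially.
                      \<forall>x\<in>V n - gball (V n) (\<mu> n) \<rho> (\<alpha> n * r). \<forall>t\<in>{T1..T}.
                        \<beta> n * qdens (\<mu> n) (nat \<lfloor>\<gamma> n * t\<rfloor>) \<rho> x \<le> \<epsilon> / 2"
      by (rule A3b_space[rule_format, OF T1_pos]) (use e in simp)
    obtain N2 where N2: "\<And>r. N2 \<le> r \<Longrightarrow> (\<forall>x\<in>F - ball \<rho> r. \<forall>t\<in>{T1..T}. q t x \<le> \<epsilon> / 2) \<and>
        (\<forall>\<^sub>F n in sequentially.
                      \<forall>x\<in>V n - gball (V n) (\<mu> n) \<rho> (\<alpha> n * r). \<forall>t\<in>{T1..T}.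
                        \<beta> n * qdens (\<mu> n) (nat \<lfloor>\<gamma> n * t\<rfloor>) \<rho> x \<le> \<epsilon> / 2)"
      using eventually_conj[OF ev3 ev4] unfolding eventually_at_top_linorder by blast
    define R' where "R' = max N2 1"
    have R': "0 < R'" "N2 \<le> R'" unfolding R'_def by auto
    have qS: "\<forall>x\<in>F - ball \<rho> R'. \<forall>t\<in>{T1..T}. q t x \<le> \<epsilon> / 2" using N2 R' by blast
    have evS: "\<forall>\<^sub>F n in sequentially.
                      \<forall>x\<in>V n - gball (V n) (\<mu> n) \<rho> (\<alpha> n * R'). \<forall>t\<in>{T1..T}.
                        \<beta> n * qdens (\<mu> n) (nat \<lfloor>\<gamma> n * t\<rfloor>) \<rho> x \<le> \<epsilon> / 2" using N2 R' by blast
    obtain c1 where c1: "0 < c1" "\<forall>n\<ge>1. \<forall>x\<in>V n. \<forall>y\<in>V n.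
                      real (gdist (\<mu> n) x y) \<ge> c1 * \<alpha> n * dist x y" using A1a_lower by blast
    obtain R0 where R0: "R' \<le> R0" "0 < R0" and evG: "\<forall>\<^sub>F n in sequentially. \<forall>x\<in>F. R0 \<le> dist \<rho> x \<longrightarrow>
            g n x \<in> V n - gball (V n) (\<mu> n) \<rho> (\<alpha> n * R')"
      using space_tail[OF graphs rho_F ann g_min c1(1) c1(2) A1b midpoint R'(1), of R'] by blast
    define K0 where "K0 = {T1..T+1} \<times> (F \<inter> cball \<rho> (R0 + 1))"
    have K0c: "compact K0" unfolding K0_def using F_compact R0 by (intro compact_Times) auto
    have K0s: "K0 \<subseteq> {0<..} \<times> F" unfolding K0_def using T1_pos by auto
    have qc: "continuous_on K0 (\<lambda>(t, x). q t x)" using continuous_on_subset[OF q_cont K0s] .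
    have "uniformly_continuous_on K0 (\<lambda>(t, x). q t x)" using compact_uniformly_continuous[OF qc K0c] .
    then have "\<exists>d>0. \<forall>p\<in>K0. \<forall>p'\<in>K0. dist p' p < d \<longrightarrow>
        dist ((\<lambda>(t, x). q t x) p') ((\<lambda>(t, x). q t x) p) < \<epsilon> / 16"
    proof -
      have e16: "0 < \<epsilon> / 16" using e by simp
      show ?thesis using \<open>uniformly_continuous_on K0 (\<lambda>(t, x). q t x)\<close>[unfolded uniformly_continuous_on_def, rule_format, OF e16] .
    qed
    then obtain d0 where d0: "0 < d0" and ucK: "\<forall>p\<in>K0. \<forall>p'\<in>K0. dist p' p < d0 \<longrightarrow>
        dist ((\<lambda>(t, x). q t x) p') ((\<lambda>(t, x). q t x) p) < \<epsilon> / 16"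
      by blast
    have "bounded ((\<lambda>(t, x). q t x) ` K0)" using compact_continuous_image[OF qc K0c] by (rule compact_imp_bounded)
    then obtain B where B: "\<forall>y\<in>(\<lambda>(t, x). q t x) ` K0. norm y \<le> B" unfolding bounded_iff by blast
    define Cq where "Cq = max B 0"
    have Cq0: "0 \<le> Cq" unfolding Cq_def by simp
    have Cq: "\<forall>t\<in>{T1..T}. \<forall>x\<in>F \<inter> cball \<rho> R0. \<bar>q t x\<bar> \<le> Cq"
    proof (intro ballI)
      fix t x assume t: "t \<in> {T1..T}" and x: "x \<in> F \<inter> cball \<rho> R0"
      have "(t, x) \<in> K0" unfolding K0_def using t x by auto
      then have "q t x \<in> (\<lambda>(t, x). q t x) ` K0" by (rule rev_image_eqI) simp
      then have "norm (q t x) \<le> B" using B by blast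
      then show "\<bar>q t x\<bar> \<le> Cq" unfolding Cq_def by simp
    qed
    have "\<exists>r>0. r \<le> min (d0 / 2) (1 / 2) \<and> (\<forall>\<^sub>F n in sequentially. \<forall>x\<in>F \<inter> cball \<rho> R0. g n x \<in> V n \<and>
           (\<forall>y\<in>V n. dist x y < 3 * r / 2 \<longrightarrow> (\<forall>t\<in>{T1..T}.
              \<beta> n * \<bar>qdens (\<mu> n) (nat \<lfloor>\<gamma> n * t\<rfloor>) \<rho> (g n x) - qdens (\<mu> n) (nat \<lfloor>\<gamma> n * t\<rfloor>) \<rho> y\<bar> \<le> \<epsilon> / 16)))"
      by (rule equicont[OF graphs ann alpha_lim g_min A1a_upper A1b A2 T1_pos]) (use e d0 R0 in auto)
    then obtain r where r: "0 < r" "r \<le> min (d0 / 2) (1 / 2)" and EQ: "\<forall>\<^sub>F n in sequentially. \<forall>x\<in>F \<inter> cball \<rho> R0. g n x \<in> V n \<and>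
           (\<forall>y\<in>V n. dist x y < 3 * r / 2 \<longrightarrow> (\<forall>t\<in>{T1..T}.
              \<beta> n * \<bar>qdens (\<mu> n) (nat \<lfloor>\<gamma> n * t\<rfloor>) \<rho> (g n x) - qdens (\<mu> n) (nat \<lfloor>\<gamma> n * t\<rfloor>) \<rho> y\<bar> \<le> \<epsilon> / 16))"
      by blast
    have UC: "\<forall>s\<in>{T1..T+1}. \<forall>t\<in>{T1..T}. \<forall>x\<in>F \<inter> cball \<rho> R0. \<forall>y\<in>F.
              \<bar>s - t\<bar> < d0 / 4 \<longrightarrow> dist y x < 3 * r / 2 \<longrightarrow> \<bar>q s y - q t x\<bar> \<le> \<epsilon> / 16"
    proof (intro ballI impI)
      fix s t x y assume s: "s \<in> {T1..T+1}" and t: "t \<in> {T1..T}" and x: "x \<in> F \<inter> cball \<rho> R0"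
        and y: "y \<in> F" and st: "\<bar>s - t\<bar> < d0 / 4" and yx: "dist y x < 3 * r / 2"
      have "dist \<rho> y \<le> dist \<rho> x + dist x y" by (rule dist_triangle)
      then have "dist \<rho> y \<le> R0 + 1" using x yx r by (simp add: dist_commute)
      then have p1: "(s, y) \<in> K0" unfolding K0_def using s y by auto
      have p2: "(t, x) \<in> K0" unfolding K0_def using t x by auto
      have "dist (s, y) (t, x) = sqrt ((dist s t)\<^sup>2 + (dist y x)\<^sup>2)" by (rule dist_Pair_Pair)
      also have "\<dots> \<le> dist s t + dist y x" by (rule sqrt_sum_squares_le_sum) auto
      also have "\<dots> < d0" using st yx r unfolding dist_real_def by simp
      finally have "dist (s, y) (t, x) < d0" .
      then have "dist ((\<lambda>(t, x). q t x) (s, y)) ((\<lambda>(t, x). q t x) (t, x)) < \<epsilon> / 16"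
        using ucK p1 p2 by blast
      then have "dist (q s y) (q t x) < \<epsilon> / 16" by simp
      then show "\<bar>q s y - q t x\<bar> \<le> \<epsilon> / 16" unfolding dist_real_def by simp
    qed
    have evb: "\<forall>\<^sub>F n in sequentially. 0 < \<beta> n"
      using beta_lim unfolding filterlim_at_top_dense by blast
    have evg: "\<forall>\<^sub>F n in sequentially. max 1 (4 / d0) < \<gamma> n"
      using gamma_lim unfolding filterlim_at_top_dense by blast
    have ev0: "\<forall>\<^sub>F n in sequentially. wgraph (V n) (\<mu> n) \<and> \<rho> \<in> V n \<and> 0 < \<beta> n \<and> 1 \<le> \<gamma> n \<and> 1 / \<gamma> n < d0 / 4"
      using eventually_ge_at_top[of 1] evb evg
    proof eventually_elim
      case (elim n)
      have "4 / d0 < \<gamma> n" using elim(3) by simp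
      then have "1 / \<gamma> n < d0 / 4" using d0 elim(3) by (simp add: field_simps)
      then show ?case using elim graphs by auto
    qed
    define Kx where "Kx = F \<inter> cball \<rho> R0"
    have Kxc: "compact Kx" unfolding Kx_def using F_compact R0 by auto
    have cov: "Kx \<subseteq> (\<Union>c\<in>Kx. ball c (r / 2))"
    proof
      fix x assume "x \<in> Kx"
      then show "x \<in> (\<Union>c\<in>Kx. ball c (r / 2))" using r(1) by (intro UN_I[of x]) auto
    qed
    obtain C where C: "C \<subseteq> Kx" "finite C" "Kx \<subseteq> (\<Union>c\<in>C. ball c (r / 2))"
      by (rule compactE_image[OF Kxc _ cov]) auto
    have setsF: "F \<inter> S \<in> sets \<nu>" if "S \<in> sets borel" for S
      unfolding nu_sets sets_restrict_space using that by auto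
    have evCc: "\<forall>c\<in>C. \<forall>\<^sub>F n in sequentially. \<forall>x\<in>F \<inter> cball \<rho> R0 \<inter> ball c (r / 2). \<forall>t\<in>{T1..T}.
            \<bar>\<beta> n * qdens (\<mu> n) (nat \<lfloor>\<gamma> n * t\<rfloor>) \<rho> (g n x) - q t x\<bar> < \<epsilon>"
    proof (rule ballI)
      fix c assume "c \<in> C"
      then have cF: "c \<in> F" using C(1) unfolding Kx_def by auto
      have Aset: "F \<inter> ball c r \<in> sets \<nu>" by (rule setsF) simp
      have Cset: "F \<inter> cball c r \<in> sets \<nu>" by (rule setsF) simp
      have "emeasure \<nu> (F \<inter> ball c r) \<le> emeasure \<nu> (F \<inter> cball c r)"
        by (rule emeasure_mono) (use Cset in auto)
      moreover have "emeasure \<nu> (F \<inter> cball c r) < \<infinity>" using nu_radon by blast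
      ultimately have Afin: "emeasure \<nu> (F \<inter> ball c r) < \<infinity>" by (rule le_less_trans)
      show "\<forall>\<^sub>F n in sequentially. \<forall>x\<in>F \<inter> cball \<rho> R0 \<inter> ball c (r / 2). \<forall>t\<in>{T1..T}.
            \<bar>\<beta> n * qdens (\<mu> n) (nat \<lfloor>\<gamma> n * t\<rfloor>) \<rho> (g n x) - q t x\<bar> < \<epsilon>"
      proof (rule core[OF ev0 EQ UC Cq Cq0 T1_pos _ _ e r(1)])
        show "0 \<le> \<epsilon> / 16" "\<epsilon> / 16 \<le> \<epsilon> / 16" using e by auto
        show "0 < d0 / 4" using d0 by simp
        show "\<forall>t>0. integrable \<nu> (q t)" using q_int by auto
        show "F \<inter> ball c r \<in> sets \<nu>" by (rule Aset)
        show "0 < emeasure \<nu> (F \<inter> ball c r)" using nu_supp cF r(1) by blast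
        show "emeasure \<nu> (F \<inter> ball c r) < \<infinity>" by (rule Afin)
        show "((\<lambda>n. ennreal (1 / \<beta> n) * gmeas (V n) (\<mu> n) (ball c r))
                 \<longlongrightarrow> emeasure \<nu> (F \<inter> ball c r)) sequentially" using A1c cF r(1) by blast
        show "uniform_limit {T1..T+1}
                  (\<lambda>n t. hitprob (\<mu> n) (nat \<lfloor>\<gamma> n * t\<rfloor>) \<rho> (ball c r))
                  (\<lambda>t. set_lebesgue_integral \<nu> (F \<inter> ball c r) (q t)) sequentially"
          using A1d[rule_format, OF T1_pos cF r(1)] .
      qed
    qed
    have evC: "\<forall>\<^sub>F n in sequentially. \<forall>c\<in>C. \<forall>x\<in>F \<inter> cball \<rho> R0 \<inter> ball c (r / 2). \<forall>t\<in>{T1..T}.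
            \<bar>\<beta> n * qdens (\<mu> n) (nat \<lfloor>\<gamma> n * t\<rfloor>) \<rho> (g n x) - q t x\<bar> < \<epsilon>"
      using eventually_ball_finite[OF C(2) evCc] .
    show ?thesis
      using eventually_ge_at_top[of 1] evT evS evG evC
    proof eventually_elim
      case (elim n)
      show ?case
      proof (rule ballI)
        fix p assume p: "p \<in> F \<times> {T1..}"
        then obtain x t where pxt: "p = (x, t)" and x: "x \<in> F" and t: "T1 \<le> t" by auto
        have gx: "g n x \<in> V n" using g_min elim(1) x by auto
        have w: "wgraph (V n) (\<mu> n)" using graphs elim(1) by auto
        define Q where "Q = \<beta> n * qdens (\<mu> n) (nat \<lfloor>\<gamma> n * t\<rfloor>) \<rho> (g n x)"
        have Q0: "0 \<le> Q" unfolding Q_def using bnn qdens_nonneg[OF w] by simp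
        have q0: "0 \<le> q t x" using q_nonneg x t T1_pos by auto
        have "\<bar>Q - q t x\<bar> < \<epsilon>"
        proof (cases "T \<le> t")
          case True
          have "Q \<le> \<epsilon> / 2" unfolding Q_def using elim(2) gx True by blast
          moreover have "q t x \<le> \<epsilon> / 2" using qT True x by blast
          ultimately show ?thesis using Q0 q0 e by linarith
        next
          case False
          then have tI: "t \<in> {T1..T}" using t by auto
          show ?thesis
          proof (cases "R0 \<le> dist \<rho> x")
            case True
            have "g n x \<in> V n - gball (V n) (\<mu> n) \<rho> (\<alpha> n * R')" using elim(4) x True by blast
            then have "Q \<le> \<epsilon> / 2" unfolding Q_def using elim(3) tI by blast
            moreover have "x \<in> F - ball \<rho> R'" using x True R0 by auto
            then have "q t x \<le> \<epsilon> / 2" using qS tI by blast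
            ultimately show ?thesis using Q0 q0 e by linarith
          next
            case False
            then have xK: "x \<in> Kx" unfolding Kx_def using x by auto
            then obtain c where c: "c \<in> C" "x \<in> ball c (r / 2)" using C(3) by blast
            have "x \<in> F \<inter> cball \<rho> R0 \<inter> ball c (r / 2)" using xK c unfolding Kx_def by auto
            then show ?thesis unfolding Q_def using elim(5) c tI by blast
          qed
        qed
        then show "dist ((\<lambda>(x, t). \<beta> n * qdens (\<mu> n) (nat \<lfloor>\<gamma> n * t\<rfloor>) \<rho> (g n x)) p) ((\<lambda>(x, t). q t x) p) < \<epsilon>"
          unfolding pxt Q_def dist_real_def by simp
      qed
    qed
  qed
  show ?thesis unfolding uniform_limit_iff using uli by (simp add: case_prod_beta)
qed

end
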